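(* For every integer $a \ge 4$ divisible by four and every odd integer $b \ge 3$, $R_\mathrm{cyc}(M_a^\mathrm{nest}, S_b) \ge a + b - 3$, where $S_b$ is any star graph of order $b$.
   Context: All graphs are finite, simple and undirected, and a graph of order $n$ has vertex set $\{0,1,\ldots,n-1\}$; $K_n$ is the complete graph on $\{0,\ldots,n-1\}$. A $2$-edge-coloring of $K_n$ assigns each edge a color in $\{1,2\}$. For a graph $H$ and such a coloring, an embedding of $H$ in color $j$ is an injective map $\varphi\colon V(H)\to V(K_n)$ such that for every edge $uv$ of $H$ the edge $\{\varphi(u),\varphi(v)\}$ has color $j$; it is increasing up to a cyclic permutation if there exists $t\in V(H)$ such that $(\varphi(t),\ldots,\varphi(|H|-1),\varphi(0),\ldots,\varphi(t-1))$ is increasing. The cyclic Ramsey number $R_\mathrm{cyc}(H_1,H_2)$ is the smallest $n$ such that every $2$-edge-coloring of $K_n$ admits an embedding of $H_1$ in color $1$ or of $H_2$ in color $2$ that is increasing up to a cyclic permutation. For even $n\ge2$, the nested matching $M_n^\mathrm{nest}$ is the graph of order $n$ whose edges are $\{v,n-1-v\}$ for $0\le v\le n/2-1$. A star graph of order $n$ is a graph on $\{0,\ldots,n-1\}$ in which one vertex (the center, arbitrary) is adjacent to all others and there are no other edges; the value of $R_\mathrm{cyc}$ does not depend on the choice of center. *)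

theory Defs
  imports Main
begin

text \<open>A graph of order h is given by its order h and its edge set E, a set of
  2-element subsets of {0..<h}.  A 2-edge-coloring of K_n is a function on
  2-element subsets of {0..<n} with values in {1,2}.\<close>

definition two_coloring :: "nat \<Rightarrow> (nat set \<Rightarrow> nat) \<Rightarrow> bool" where
  "two_coloring n c \<longleftrightarrow> (\<forall>u<n. \<forall>v<n. u \<noteq> v \<longrightarrow> c {u, v} \<in> {1, 2})"

definition cyc_embedding ::
  "nat \<Rightarrow> (nat set \<Rightarrow> nat) \<Rightarrow> nat \<Rightarrow> nat set set \<Rightarrow> nat \<Rightarrow> (nat \<Rightarrow> nat) \<Rightarrow> bool" where
  "cyc_embedding n c h E j \<phi> \<longleftrightarrow>
     inj_on \<phi> {0..<h} \<and> \<phi> ` {0..<h} \<subseteq> {0..<n} \<and>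
     (\<forall>e\<in>E. c (\<phi> ` e) = j) \<and>
     (\<exists>t<h. \<forall>i k. i < k \<and> k < h \<longrightarrow> \<phi> ((t + i) mod h) < \<phi> ((t + k) mod h))"

definition cyc_ramsey_prop :: "nat \<Rightarrow> nat \<Rightarrow> nat set set \<Rightarrow> nat \<Rightarrow> nat set set \<Rightarrow> bool" where
  "cyc_ramsey_prop n h1 E1 h2 E2 \<longleftrightarrow>
     (\<forall>c. two_coloring n c \<longrightarrow>
        (\<exists>\<phi>. cyc_embedding n c h1 E1 1 \<phi>) \<or> (\<exists>\<phi>. cyc_embedding n c h2 E2 2 \<phi>))"

definition R_cyc :: "nat \<Rightarrow> nat set set \<Rightarrow> nat \<Rightarrow> nat set set \<Rightarrow> nat" where
  "R_cyc h1 E1 h2 E2 = (LEAST n. cyc_ramsey_prop n h1 E1 h2 E2)"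

definition nest_matching :: "nat \<Rightarrow> nat set set" where
  "nest_matching n = {{v, n - 1 - v} | v. v < n div 2}"

definition star_edges :: "nat \<Rightarrow> nat \<Rightarrow> nat set set" where
  "star_edges n z = {{z, v} | v. v < n \<and> v \<noteq> z}"

end

theory Submission
  imports Defs
begin

definition col :: "nat \<Rightarrow> nat \<Rightarrow> nat set \<Rightarrow> nat" where
  "col N r e = (if \<exists>x y. e = {x,y} \<and> x < y \<and> (y - x \<le> r \<or> N - (y - x) \<le> r) then 2 else 1)"

lemma col_pair: "x < y \<Longrightarrow> col N r {x,y} = (if y - x \<le> r \<or> N - (y - x) \<le> r then 2 else 1)"
  unfolding col_def by (auto simp: doubleton_eq_iff)

lemma col_two: "two_coloring n (col N r)"
  by (simp add: two_coloring_def col_def)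

lemma mono_diff:
  fixes w :: "nat \<Rightarrow> nat"
  assumes mono: "\<And>i j. i < j \<Longrightarrow> j < a \<Longrightarrow> w i < w j" and "i \<le> j" and "j < a"
  shows "w i + (j - i) \<le> w j"
  using assms(2,3)
proof (induction j rule: dec_induct)
  case base then show ?case by simp
next
  case (step m)
  have "w m < w (Suc m)" using mono step by simp
  then show ?case using step by simp
qed

lemma gap_nonwrap:
  fixes w :: "nat \<Rightarrow> nat"
  assumes mono: "\<And>i j. i < j \<Longrightarrow> j < a \<Longrightarrow> w i < w j"
    and bound: "\<And>i. i < a \<Longrightarrow> w i < N" and pq: "p + 1 \<le> q" "q + 1 < a"
  shows "(w (p+1) - w p) + (w (q+1) - w q) + a \<le> N + 2"
proof -
  have 1: "w 0 + (p - 0) \<le> w p" using mono_diff[where w=w and a=a and i=0 and j=p, OF mono] pq by simp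
  have 2: "w (p+1) + (q - (p+1)) \<le> w q" using mono_diff[where w=w and a=a and i="p+1" and j=q, OF mono] pq by simp
  have 3: "w (q+1) + ((a-1) - (q+1)) \<le> w (a-1)" using mono_diff[where w=w and a=a and i="q+1" and j="a-1", OF mono] pq by simp
  have 4: "w (a-1) < N" using bound pq by simp
  have 5: "w p < w (p+1)" "w q < w (q+1)" using mono pq by auto
  show ?thesis using 1 2 3 4 5 pq by linarith
qed

lemma gap_wrap:
  fixes w :: "nat \<Rightarrow> nat"
  assumes mono: "\<And>i j. i < j \<Longrightarrow> j < a \<Longrightarrow> w i < w j"
    and bound: "\<And>i. i < a \<Longrightarrow> w i < N" and pq: "p + 1 \<le> a - 1"
  shows "(w (p+1) - w p) + (N - (w (a-1) - w 0)) + a \<le> N + 2"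
proof -
  have 1: "w 0 + (p - 0) \<le> w p" using mono_diff[where w=w and a=a and i=0 and j=p, OF mono] pq by simp
  have 3: "w (p+1) + ((a-1) - (p+1)) \<le> w (a-1)" using mono_diff[where w=w and a=a and i="p+1" and j="a-1", OF mono] pq by simp
  have 4: "w (a-1) < N" using bound pq by simp
  have 5: "w p < w (p+1)" using mono pq by auto
  show ?thesis using 1 3 4 5 pq by linarith
qed


lemma no_match:
  assumes a4: "a \<ge> 4" and ah: "a = 2 * h" and nN: "n \<le> N" and Nr: "N + 1 = a + 2 * r"
    and emb: "cyc_embedding n (col N r) a (nest_matching a) 1 \<phi>"
  shows False
proof -
  obtain t where t: "t < a" and mono0: "\<And>i k. i < k \<Longrightarrow> k < a \<Longrightarrow> \<phi> ((t + i) mod a) < \<phi> ((t + k) mod a)"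
    using emb unfolding cyc_embedding_def by blast
  define w where "w i = \<phi> ((t + i) mod a)" for i
  have mono: "\<And>i j. i < j \<Longrightarrow> j < a \<Longrightarrow> w i < w j" using mono0 w_def by simp
  have img: "\<phi> ` {0..<a} \<subseteq> {0..<n}" using emb unfolding cyc_embedding_def by blast
  have bound: "\<And>i. i < a \<Longrightarrow> w i < N"
  proof -
    fix i assume "i < a"
    have "(t + i) mod a < a" using a4 by simp
    then have "\<phi> ((t + i) mod a) < n" using img by (auto simp: image_subset_iff)
    then show "w i < N" using nN w_def by simp
  qed
  have cols: "\<forall>e\<in>nest_matching a. col N r (\<phi> ` e) = 1" using emb by (simp add: cyc_embedding_def)
  have h1: "h \<ge> 2" using a4 ah by simp
  have hd: "a div 2 = h" using ah by simp
  have e1: "{h - 1, h} \<in> nest_matching a"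
  proof -
    have eq: "a - 1 - (h - 1) = h" and lt: "h - 1 < a div 2" using h1 ah by auto
    then have "{h - 1, h} = {h - 1, a - 1 - (h - 1)} \<and> h - 1 < a div 2" by (simp only: eq lt)
    then show ?thesis unfolding nest_matching_def by (intro CollectI exI[of _ "h - 1"])
  qed
  have e2: "{0, a - 1} \<in> nest_matching a"
  proof -
    have "a - 1 - 0 = a - 1" "0 < a div 2" using h1 ah by auto
    then have "{0, a - 1} = {0, a - 1 - 0} \<and> (0::nat) < a div 2" by simp
    then show ?thesis unfolding nest_matching_def by (intro CollectI exI[of _ "0::nat"])
  qed
  have "col N r (\<phi> ` {h - 1, h}) = 1" using cols e1 by blast
  then have c1: "col N r {\<phi> (h - 1), \<phi> h} = 1" by simp
  have "col N r (\<phi> ` {0, a - 1}) = 1" using cols e2 by blast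
  then have c2: "col N r {\<phi> 0, \<phi> (a - 1)} = 1" by simp
  have gapr: "r < w j - w i \<and> r < N - (w j - w i)"
    if "i < j" "j < a" "col N r {w i, w j} = 1 \<or> col N r {w j, w i} = 1" for i j
  proof -
    have lt: "w i < w j" using mono that by simp
    have "{w j, w i} = {w i, w j}" by (rule insert_commute)
    then have "col N r {w i, w j} = 1" using that(3) by metis
    then have "\<not> (w j - w i \<le> r \<or> N - (w j - w i) \<le> r)" using col_pair[OF lt, of N r] by presburger
    then show ?thesis by linarith
  qed
  consider "t = 0" | "0 < t \<and> t < h" | "t = h" | "h < t" by linarith
  then show False
  proof cases
    case 1
    have wa: "w i = \<phi> i" if "i < a" for i using that 1 w_def by simp
    have w1: "w (h - 1) = \<phi> (h - 1)" "w h = \<phi> h" "w 0 = \<phi> 0" "w (a - 1) = \<phi> (a - 1)"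
      using wa h1 ah by auto
    have pA: "h - 1 < h" "h < a" using h1 ah by auto
    have A: "r < w h - w (h - 1)" using gapr[OF pA] c1 w1 by simp
    have pB: "0 < a - 1" "a - 1 < a" using h1 ah by auto
    have B: "r < N - (w (a - 1) - w 0)" using gapr[OF pB] c2 w1 by simp
    have "(w (h-1+1) - w (h-1)) + (N - (w (a-1) - w 0)) + a \<le> N + 2"
      by (rule gap_wrap[OF mono bound]) (use h1 ah in auto)
    then show False using A B Nr h1 by simp
  next
    case 2
    have w1: "w (h - 1 - t) = \<phi> (h - 1)" "w (h - t) = \<phi> h" using 2 w_def ah by auto
    have w2: "w (a - 1 - t) = \<phi> (a - 1)" "w (a - t) = \<phi> 0" using 2 w_def ah by auto
    have pA: "h - 1 - t < h - t" "h - t < a" using 2 ah by auto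
    have A: "r < w (h - t) - w (h - 1 - t)" using gapr[OF pA] c1 w1 by simp
    have pB: "a - 1 - t < a - t" "a - t < a" using 2 ah by auto
    have B: "r < w (a - t) - w (a - 1 - t)" using gapr[OF pB] c2 w2 by simp
    have "(w (h-1-t+1) - w (h-1-t)) + (w (a-1-t+1) - w (a-1-t)) + a \<le> N + 2"
      by (rule gap_nonwrap[OF mono bound]) (use 2 ah in auto)
    moreover have "h-1-t+1 = h - t" "a-1-t+1 = a - t" using 2 ah by auto
    ultimately show False using A B Nr by simp
  next
    case 3
    have w1: "w (a - 1) = \<phi> (h - 1)" "w 0 = \<phi> h"
    proof -
      have "t + (a - 1) = (h - 1) + a" using 3 ah h1 by simp
      moreover have "((h - 1) + a) mod a = h - 1"
      proof -
        have "h - 1 < a" using ah h1 by simp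
        then show ?thesis by (simp only: mod_add_self2 mod_less)
      qed
      ultimately have "(t + (a - 1)) mod a = h - 1" by simp
      then show "w (a - 1) = \<phi> (h - 1)" using w_def by simp
      show "w 0 = \<phi> h" using w_def 3 ah by simp
    qed
    have w2: "w (h - 1) = \<phi> (a - 1)" "w h = \<phi> 0"
    proof -
      have e: "t + (h - 1) = a - 1" "t + h = a" using 3 ah h1 by auto
      have "(a - 1) mod a = a - 1" using h1 ah by simp
      then show "w (h - 1) = \<phi> (a - 1)" using w_def e by simp
      show "w h = \<phi> 0" using w_def e by simp
    qed
    have pB: "0 < a - 1" "a - 1 < a" using h1 ah by auto
    have B: "r < N - (w (a - 1) - w 0)" using gapr[OF pB] c1 w1 by simp
    have pA: "h - 1 < h" "h < a" using h1 ah by auto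
    have A: "r < w h - w (h - 1)" using gapr[OF pA] c2 w2 by simp
    have "(w (h-1+1) - w (h-1)) + (N - (w (a-1) - w 0)) + a \<le> N + 2"
      by (rule gap_wrap[OF mono bound]) (use h1 ah in auto)
    then show False using A B Nr h1 by simp
  next
    case 4
    have w1: "w (h - 1 + a - t) = \<phi> (h - 1)" "w (h + a - t) = \<phi> h"
    proof -
      have "t + (h - 1 + a - t) = (h - 1) + a" using 4 t h1 by simp
      moreover have "((h - 1) + a) mod a = h - 1"
      proof -
        have "h - 1 < a" using ah h1 by simp
        then show ?thesis by (simp only: mod_add_self2 mod_less)
      qed
      ultimately have "(t + (h - 1 + a - t)) mod a = h - 1" by simp
      then show "w (h - 1 + a - t) = \<phi> (h - 1)" using w_def by simp
      have "t + (h + a - t) = h + a" using 4 t by simp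
      moreover have "(h + a) mod a = h"
      proof -
        have "h < a" using ah h1 by simp
        then show ?thesis by (simp only: mod_add_self2 mod_less)
      qed
      ultimately have "(t + (h + a - t)) mod a = h" by simp
      then show "w (h + a - t) = \<phi> h" using w_def by simp
    qed
    have w2: "w (a - 1 - t) = \<phi> (a - 1)" "w (a - t) = \<phi> 0" using 4 t w_def ah by auto
    have pA: "h - 1 + a - t < h + a - t" "h + a - t < a" using 4 t h1 ah by auto
    have A: "r < w (h + a - t) - w (h - 1 + a - t)" using gapr[OF pA] c1 w1 by simp
    have pB: "a - 1 - t < a - t" "a - t < a" using 4 t ah by auto
    have B: "r < w (a - t) - w (a - 1 - t)" using gapr[OF pB] c2 w2 by simp
    have "(w (a-1-t+1) - w (a-1-t)) + (w (h-1+a-t+1) - w (h-1+a-t)) + a \<le> N + 2"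
      by (rule gap_nonwrap[OF mono bound]) (use 4 t h1 ah in auto)
    moreover have "h-1+a-t+1 = h + a - t" "a-1-t+1 = a - t" using 4 t h1 ah by auto
    ultimately show False using A B Nr by simp
  qed
qed

lemma no_star:
  assumes nN: "n \<le> N" and br: "b = 2 * r + 3" and rN: "r \<le> N" and zb: "z < b"
    and emb: "cyc_embedding n (col N r) b (star_edges b z) 2 \<phi>"
  shows False
proof -
  have inj: "inj_on \<phi> {0..<b}" using emb by (simp add: cyc_embedding_def)
  have img: "\<phi> ` {0..<b} \<subseteq> {0..<n}" using emb by (simp add: cyc_embedding_def)
  have cols: "\<forall>e\<in>star_edges b z. col N r (\<phi> ` e) = 2" using emb by (simp add: cyc_embedding_def)
  define x where "x = \<phi> z"
  define S where "S = \<phi> ` ({0..<b} - {z})"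
  have cardS: "card S = b - 1"
  proof -
    have "inj_on \<phi> ({0..<b} - {z})" using inj by (rule inj_on_subset) auto
    then have "card S = card ({0..<b} - {z})" unfolding S_def by (rule card_image)
    also have "\<dots> = b - 1" using zb by simp
    finally show ?thesis .
  qed
  have xN: "x < N"
  proof -
    have "\<phi> z < n" using img zb by (auto simp: image_subset_iff)
    then show ?thesis using nN unfolding x_def by simp
  qed
  have Sprop: "y \<noteq> x \<and> y < N \<and> col N r {x, y} = 2" if "y \<in> S" for y
  proof -
    obtain v where v0: "v \<in> {0..<b} - {z}" "y = \<phi> v" using \<open>y \<in> S\<close> unfolding S_def by blast
    then have v: "v < b" "v \<noteq> z" "y = \<phi> v" by auto
    have "y \<noteq> x" using v zb unfolding x_def by (simp add: inj_on_eq_iff[OF inj])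
    moreover have "y < N"
    proof -
      have "\<phi> v < n" using img v by (auto simp: image_subset_iff)
      then show ?thesis using nN v by simp
    qed
    moreover have "{z, v} \<in> star_edges b z" unfolding star_edges_def using v by blast
    then have "col N r (\<phi> ` {z, v}) = 2" using cols by blast
    then have "col N r {x, y} = 2" using v unfolding x_def by simp
    ultimately show ?thesis by blast
  qed
  define d where "d y = (if x < y then y - x else y + N - x)" for y
  have dS: "d ` S \<subseteq> {1..r} \<union> {N - r..<N}"
  proof
    fix u assume "u \<in> d ` S"
    then obtain y where y: "y \<in> S" "u = d y" by auto
    have yx: "y \<noteq> x" "y < N" "col N r {x, y} = 2" using Sprop y by auto
    show "u \<in> {1..r} \<union> {N - r..<N}"
    proof (cases "x < y")
      case True
      then have "y - x \<le> r \<or> N - (y - x) \<le> r" using yx col_pair[OF True, of N r] by (auto split: if_splits)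
      then show ?thesis using True y yx unfolding d_def by auto
    next
      case False
      then have lt: "y < x" using yx by simp
      have "{x, y} = {y, x}" by (rule insert_commute)
      then have "col N r {y, x} = 2" using yx by simp
      then have "x - y \<le> r \<or> N - (x - y) \<le> r" using col_pair[OF lt, of N r] by (auto split: if_splits)
      then show ?thesis using lt y yx xN unfolding d_def by auto
    qed
  qed
  have dinj: "inj_on d S"
  proof (rule inj_onI)
    fix y1 y2 assume y12: "y1 \<in> S" "y2 \<in> S" "d y1 = d y2"
    have f: "y1 < N" "y2 < N" using Sprop y12 by auto
    show "y1 = y2"
    proof (cases "x < y1"; cases "x < y2")
      assume "x < y1" "x < y2" then show ?thesis using y12(3) unfolding d_def by simp
    next
      assume "x < y1" "\<not> x < y2"
      then have "y1 - x = y2 + N - x" using y12(3) unfolding d_def by simp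
      then show ?thesis using f \<open>x < y1\<close> by linarith
    next
      assume "\<not> x < y1" "x < y2"
      then have "y1 + N - x = y2 - x" using y12(3) unfolding d_def by simp
      then show ?thesis using f \<open>x < y2\<close> by linarith
    next
      assume "\<not> x < y1" "\<not> x < y2"
      then have "y1 + N - x = y2 + N - x" using y12(3) unfolding d_def by simp
      then show ?thesis using xN by linarith
    qed
  qed
  have "card S = card (d ` S)" using dinj by (simp add: card_image)
  also have "\<dots> \<le> card ({1..r} \<union> {N - r..<N})" using dS by (rule card_mono[rotated]) simp
  also have "\<dots> \<le> card {1..r} + card {N - r..<N}" by (rule card_Un_le)
  also have "\<dots> = r + r" using rN by simp
  finally show False using cardS br by simp
qed

lemma exists_ramsey:
  assumes ak: "a = 2 * k" "k \<ge> 1" and bm: "b = m + 1" "m \<ge> 1" and zb: "z < b"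
  shows "cyc_ramsey_prop (k + k * m) a (nest_matching a) b (star_edges b z)"
  unfolding cyc_ramsey_prop_def
proof (intro allI impI)
  fix c assume tc: "two_coloring (k + k * m) c"
  define n where "n = k + k * m"
  define st where "st i = k + (k - 1 - i) * m" for i
  have st_bound: "k \<le> st i \<and> st i + m \<le> n" if "i < k" for i
  proof -
    have "k - i = Suc (k - 1 - i)" using that by simp
    then have "(k - 1 - i) * m + m = (k - i) * m" by simp
    also have "\<dots> \<le> k * m" by simp
    finally show ?thesis unfolding st_def n_def by simp
  qed
  have st_order: "st j + m \<le> st i" if "i < j" "j < k" for i j
  proof -
    have "k - j = Suc (k - 1 - j)" using that by simp
    then have "(k - 1 - j) * m + m = (k - j) * m" by simp
    also have "\<dots> \<le> (k - 1 - i) * m" using that by (intro mult_le_mono1) simp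
    finally show ?thesis unfolding st_def by simp
  qed
  show "(\<exists>\<phi>. cyc_embedding (k + k * m) c a (nest_matching a) 1 \<phi>) \<or>
        (\<exists>\<phi>. cyc_embedding (k + k * m) c b (star_edges b z) 2 \<phi>)"
  proof (cases "\<exists>i<k. \<forall>j<m. c {i, st i + j} = 2")
    case True
    then obtain i where i: "i < k" and allc: "\<And>j. j < m \<Longrightarrow> c {i, st i + j} = 2" by blast
    have sb: "k \<le> st i" "st i + m \<le> n" using st_bound[OF i] by auto
    define \<phi> where "\<phi> v = (if v = z then i else if z < v then st i + (v - z - 1) else st i + (v + b - z - 1))" for v
    have rot: "\<phi> ((z + l) mod b) = (if l = 0 then i else st i + (l - 1))" if "l < b" for l
    proof (cases "z + l < b")
      case True
      then have "(z + l) mod b = z + l" by simp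
      then show ?thesis unfolding \<phi>_def by simp
    next
      case False
      then have "(z + l) mod b = z + l - b" using that zb by (simp add: mod_if)
      moreover have "z + l - b < z" "l \<noteq> 0" using False that zb by auto
      moreover have "z + l - b + b - z - 1 = l - 1" using False by simp
      ultimately show ?thesis unfolding \<phi>_def by simp
    qed
    have val: "\<exists>j<m. \<phi> v = st i + j" if "v < b" "v \<noteq> z" for v
    proof (cases "z < v")
      case True
      then show ?thesis unfolding \<phi>_def using that bm by (intro exI[of _ "v - z - 1"]) auto
    next
      case False
      then show ?thesis unfolding \<phi>_def using that bm zb by (intro exI[of _ "v + b - z - 1"]) auto
    qed
    have phin: "\<phi> v < n" if vb: "v < b" for v
    proof (cases "v = z")
      case True then show ?thesis unfolding \<phi>_def using i sb by simp
    next
      case False then obtain j where "j < m" "\<phi> v = st i + j" using val vb by blast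
      then show ?thesis using sb by simp
    qed
    have cyc: "\<phi> ((z + l1) mod b) < \<phi> ((z + l2) mod b)" if "l1 < l2" "l2 < b" for l1 l2
    proof -
      have l1b: "l1 < b" using that by simp
      have r1: "\<phi> ((z + l1) mod b) = (if l1 = 0 then i else st i + (l1 - 1))" by (rule rot[OF l1b])
      have r2: "\<phi> ((z + l2) mod b) = st i + (l2 - 1)" using rot[OF that(2)] that by simp
      show ?thesis
      proof (cases "l1 = 0")
        case True then show ?thesis using r1 r2 i sb by simp
      next
        case False then show ?thesis using r1 r2 that by simp
      qed
    qed
    have inj: "inj_on \<phi> {0..<b}"
    proof (rule inj_onI)
      fix v1 v2 assume v: "v1 \<in> {0..<b}" "v2 \<in> {0..<b}" "\<phi> v1 = \<phi> v2"
      show "v1 = v2"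
      proof (rule ccontr)
        assume ne: "v1 \<noteq> v2"
        have "v1 < b" "v2 < b" using v by auto
        note vb = this
        have ik: "i < st i" using i sb by simp
        have A1: "\<phi> z < st i" unfolding \<phi>_def using ik by simp
        have A2: "st i \<le> \<phi> v \<and> \<phi> v < st i + (b - z - 1)" if "z < v" "v < b" for v
          unfolding \<phi>_def using that by (simp; arith)
        have A3: "st i + (b - z - 1) \<le> \<phi> v" if "v < z" for v
          unfolding \<phi>_def using that zb by (simp; arith)
        have A4: "v1 = v2" if "z < v1" "z < v2"
          using v(3) that unfolding \<phi>_def by (simp; arith)
        have A5: "v1 = v2" if "v1 < z" "v2 < z"
          using v(3) that zb unfolding \<phi>_def by (simp; arith)
        consider "v1 = z" | "z < v1" | "v1 < z" by linarith
        then show False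
        proof cases
          assume c1: "v1 = z"
          then have "v2 \<noteq> z" using ne by simp
          then consider "z < v2" | "v2 < z" by linarith
          then show False
          proof cases
            assume c2: "z < v2" then show False using A1 A2[OF c2 vb(2)] v(3) c1 by simp
          next
            assume c2: "v2 < z" then show False using A1 A3[OF c2] v(3) c1 by simp
          qed
        next
          assume c1: "z < v1"
          consider "v2 = z" | "z < v2" | "v2 < z" by linarith
          then show False
          proof cases
            assume c2: "v2 = z" then show False using A1 A2[OF c1 vb(1)] v(3) by simp
          next
            assume c2: "z < v2" then show False using A4[OF c1 c2] ne by simp
          next
            assume c2: "v2 < z" then show False using A2[OF c1 vb(1)] A3[OF c2] v(3) by simp
          qed
        next
          assume c1: "v1 < z"
          consider "v2 = z" | "z < v2" | "v2 < z" by linarith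
          then show False
          proof cases
            assume c2: "v2 = z" then show False using A1 A3[OF c1] v(3) c2 by simp
          next
            assume c2: "z < v2" then show False using A2[OF c2 vb(2)] A3[OF c1] v(3) by simp
          next
            assume c2: "v2 < z" then show False using A5[OF c1 c2] ne by simp
          qed
        qed
      qed
    qed
    have "cyc_embedding n c b (star_edges b z) 2 \<phi>"
      unfolding cyc_embedding_def
    proof (intro conjI)
      show "inj_on \<phi> {0..<b}" by (rule inj)
      show "\<phi> ` {0..<b} \<subseteq> {0..<n}" using phin by auto
      show "\<forall>e\<in>star_edges b z. c (\<phi> ` e) = 2"
      proof
        fix e assume "e \<in> star_edges b z"
        then obtain v where v: "e = {z, v}" "v < b" "v \<noteq> z" unfolding star_edges_def by blast
        obtain j where "j < m" "\<phi> v = st i + j" using val[OF v(2) v(3)] by blast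
        moreover have "\<phi> z = i" unfolding \<phi>_def by simp
        ultimately show "c (\<phi> ` e) = 2" using v allc by simp
      qed
      show "\<exists>t<b. \<forall>i k. i < k \<and> k < b \<longrightarrow> \<phi> ((t + i) mod b) < \<phi> ((t + k) mod b)"
        using zb cyc by blast
    qed
    then show ?thesis unfolding n_def by blast
  next
    case False
    then have "\<forall>i. \<exists>j. i < k \<longrightarrow> j < m \<and> c {i, st i + j} \<noteq> 2" by auto
    from choice[OF this] obtain jf where jfa: "\<forall>i. i < k \<longrightarrow> jf i < m \<and> c {i, st i + jf i} \<noteq> 2"
      by blast
    then have jf: "\<And>i. i < k \<Longrightarrow> jf i < m \<and> c {i, st i + jf i} \<noteq> 2" by blast
    have col1: "c {i, st i + jf i} = 1" if "i < k" for i
    proof -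
      have "i \<noteq> st i + jf i" "i < n" "st i + jf i < n" using st_bound[OF that] jf[OF that] that
        unfolding n_def by auto
      then have "c {i, st i + jf i} \<in> {1, 2}" using tc unfolding two_coloring_def n_def by blast
      then show ?thesis using jf[OF that] by blast
    qed
    define \<phi> where "\<phi> v = (if v < k then v else st (a - 1 - v) + jf (a - 1 - v))" for v
    have mono: "\<phi> l1 < \<phi> l2" if "l1 < l2" "l2 < a" for l1 l2
    proof (cases "l2 < k")
      case True then show ?thesis unfolding \<phi>_def using that by simp
    next
      case F2: False
      have i2: "a - 1 - l2 < k" using F2 that ak by simp
      show ?thesis
      proof (cases "l1 < k")
        case True
        then show ?thesis unfolding \<phi>_def using F2 st_bound[OF i2] by simp
      next
        case False
        have i1: "a - 1 - l1 < k" using False that ak by simp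
        have "a - 1 - l2 < a - 1 - l1" using that False ak by simp
        then have "st (a - 1 - l1) + m \<le> st (a - 1 - l2)" using st_order i1 by blast
        then show ?thesis unfolding \<phi>_def using False F2 jf[OF i1] by simp
      qed
    qed
    have inj: "inj_on \<phi> {0..<a}"
    proof (rule inj_onI)
      fix v1 v2 assume v: "v1 \<in> {0..<a}" "v2 \<in> {0..<a}" "\<phi> v1 = \<phi> v2"
      show "v1 = v2"
      proof (rule ccontr)
        assume "v1 \<noteq> v2"
        then consider "v1 < v2" | "v2 < v1" by linarith
        then show False using mono v by cases fastforce+
      qed
    qed
    have phin: "\<phi> v < n" if "v < a" for v
    proof (cases "v < k")
      case True then show ?thesis unfolding \<phi>_def n_def by simp
    next
      case False
      then have i1: "a - 1 - v < k" using that ak by simp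
      then show ?thesis unfolding \<phi>_def using False st_bound[OF i1] jf[OF i1] by simp
    qed
    have "cyc_embedding n c a (nest_matching a) 1 \<phi>"
      unfolding cyc_embedding_def
    proof (intro conjI)
      show "inj_on \<phi> {0..<a}" by (rule inj)
      show "\<phi> ` {0..<a} \<subseteq> {0..<n}" using phin by auto
      show "\<forall>e\<in>nest_matching a. c (\<phi> ` e) = 1"
      proof
        fix e assume "e \<in> nest_matching a"
        then obtain v where v: "e = {v, a - 1 - v}" "v < a div 2" unfolding nest_matching_def by blast
        have vk: "v < k" using v ak by simp
        have e1: "\<phi> v = v" unfolding \<phi>_def using vk by simp
        have e2: "a - 1 - (a - 1 - v) = v" "\<not> a - 1 - v < k" using vk ak by auto
        have "\<phi> (a - 1 - v) = st v + jf v" unfolding \<phi>_def using e2 by simp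
        then show "c (\<phi> ` e) = 1" using v(1) e1 col1[OF vk] by simp
      qed
      show "\<exists>t<a. \<forall>i k. i < k \<and> k < a \<longrightarrow> \<phi> ((t + i) mod a) < \<phi> ((t + k) mod a)"
        using ak mono by (intro exI[of _ 0]) auto
    qed
    then show ?thesis unfolding n_def by blast
  qed
qed

theorem proposition4p34:
  fixes a b z :: nat
  assumes "a \<ge> 4" and "4 dvd a" and "b \<ge> 3" and "odd b" and "z < b"
  shows "R_cyc a (nest_matching a) b (star_edges b z) \<ge> a + b - 3"
proof -
  obtain q where aq: "a = 4 * q" using assms(2) by blast
  define h where "h = 2 * q"
  have ah: "a = 2 * h" using aq h_def by simp
  define r where "r = (b - 3) div 2"
  have br: "b = 2 * r + 3" using assms(3,4) unfolding r_def by (auto elim!: oddE)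
  define N where "N = a + b - 4"
  have Nr: "N + 1 = a + 2 * r" using assms(1) br unfolding N_def by simp
  have rN: "r \<le> N" using assms(1) br unfolding N_def by simp
  define P where "P n = cyc_ramsey_prop n a (nest_matching a) b (star_edges b z)" for n
  have ex: "P (h + h * (b - 1))" unfolding P_def
    by (rule exists_ramsey) (use ah assms in auto)
  have notP: "\<not> P n" if "n \<le> N" for n
  proof
    assume "P n"
    then have "(\<exists>\<phi>. cyc_embedding n (col N r) a (nest_matching a) 1 \<phi>) \<or>
        (\<exists>\<phi>. cyc_embedding n (col N r) b (star_edges b z) 2 \<phi>)"
      unfolding P_def cyc_ramsey_prop_def using col_two by blast
    then show False
    proof
      assume "\<exists>\<phi>. cyc_embedding n (col N r) a (nest_matching a) 1 \<phi>"
      then obtain \<phi> where "cyc_embedding n (col N r) a (nest_matching a) 1 \<phi>" by blast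
      then show False using no_match[OF assms(1) ah that Nr] by blast
    next
      assume "\<exists>\<phi>. cyc_embedding n (col N r) b (star_edges b z) 2 \<phi>"
      then obtain \<phi> where "cyc_embedding n (col N r) b (star_edges b z) 2 \<phi>" by blast
      then show False using no_star[OF that br rN assms(5)] by blast
    qed
  qed
  have PL: "P (LEAST n. P n)" using ex by (rule LeastI)
  have "R_cyc a (nest_matching a) b (star_edges b z) = (LEAST n. P n)"
    unfolding R_cyc_def P_def by simp
  moreover have "a + b - 3 \<le> (LEAST n. P n)"
  proof (rule ccontr)
    assume "\<not> a + b - 3 \<le> (LEAST n. P n)"
    then have "(LEAST n. P n) \<le> N" unfolding N_def using assms(1) by simp
    then show False using notP PL by blast
  qed
  ultimately show ?thesis by simp
qed

end
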